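(* Let $m\ge1$, $n\in\mathbb{Z}$, and let $B=(b_0,\ldots,b_{m-1})$ and $T=(t_0,\ldots,t_{m-1})$ be sequences of integers with $\sum_i b_i\ge n$ and $\sum_i t_i=n+m-1$. Then for every $l\in\{1,\ldots,m\}$ there exists $i\in\{0,\ldots,m-1\}$ such that for every $l'\in\{1,\ldots,l\}$, $$\sum_{j=i}^{i+l'-1}b_j\ge 1-l'+\sum_{j=i}^{i+l'-1}t_j.$$
   Context: Indices of $B$ and $T$ are taken modulo $m$ (ring arrangement). *)

theory Defs
  imports Main
begin

end

theory Submission
  imports Defs
begin

theorem mainTheorem7:
  fixes m :: nat and n :: int and b t :: "nat \<Rightarrow> int"
  assumes "m \<ge> 1"
    and "(\<Sum>i<m. b i) \<ge> n"
    and "(\<Sum>i<m. t i) = n + int m - 1"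
  shows "\<forall>l\<in>{1..m}. \<exists>i<m. \<forall>l'\<in>{1..l}.
           (\<Sum>j=i..i+l'-1. b (j mod m)) \<ge> 1 - int l' + (\<Sum>j=i..i+l'-1. t (j mod m))"
proof -
  define c where "c j = b j - t j + 1" for j
  define P where "P k = (\<Sum>j<k. c (j mod m))" for k
  define S where "S = (\<Sum>j<m. c j)"
  have S1: "S \<ge> 1" using assms(2,3) by (simp add: S_def c_def sum.distrib sum_subtractf)
  have Pm: "P m = S" unfolding P_def S_def by (rule sum.cong) auto
  have per: "P (k + m) = P k + S" for k
  proof (induction k)
    case 0 then show ?case using Pm by (simp add: P_def)
  next
    case (Suc k)
    have "P (Suc k + m) = P (k+m) + c ((k+m) mod m)" by (simp add: P_def)
    also have "\<dots> = P k + S + c (k mod m)" using Suc by simp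
    also have "\<dots> = P (Suc k) + S" by (simp add: P_def)
    finally show ?case .
  qed
  define M where "M = Min (P ` {..<m})"
  have ne: "{..<m} \<noteq> {}" using assms(1) by (metis lessThan_iff less_le_trans zero_less_one empty_iff)
  have "M \<in> P ` {..<m}" unfolding M_def using ne by (intro Min_in) auto
  then obtain k0 where k0: "k0 < m" "P k0 = M" by auto
  define I where "I = {k. k < m \<and> P k = M}"
  define i where "i = Max I"
  have fI: "finite I" unfolding I_def by auto
  have "i \<in> I" unfolding i_def using fI k0 by (intro Max_in) (auto simp: I_def)
  hence i: "i < m" "P i = M" by (auto simp: I_def)
  have Mle: "M \<le> P k" if "k < m" for k unfolding M_def using that by auto
  have gt: "P k > P i" if "i < k" "k \<le> i + m" for k
  proof (cases "k < m")
    case True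
    have "k \<notin> I" using that(1) fI i_def Max_ge leD by blast
    then show ?thesis using True Mle[OF True] i by (auto simp: I_def)
  next
    case False
    then obtain r where r: "k = r + m" by (metis add.commute le_Suc_ex not_less)
    have "r < m" using r that i by linarith
    moreover have "P i \<le> P r" using Mle[OF \<open>r < m\<close>] i by simp
    ultimately show ?thesis using per[of r] r S1 by simp
  qed
  have key: "(\<Sum>j=i..i+l'-1. b (j mod m)) \<ge> 1 - int l' + (\<Sum>j=i..i+l'-1. t (j mod m))"
    if "1 \<le> l'" "l' \<le> m" for l'
  proof -
    have e: "{i..i+l'-1} = {i..<i+l'}" using that by auto
    have "P (i+l') = P i + (\<Sum>j=i..<i+l'. c (j mod m))"
      unfolding P_def by (metis le_add1 sum.atLeastLessThan_concat lessThan_atLeast0 le0)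
    moreover have "P (i + l') > P i" using gt that by auto
    ultimately have "(\<Sum>j=i..<i+l'. c (j mod m)) \<ge> 1" by linarith
    moreover have "(\<Sum>j=i..<i+l'. c (j mod m)) = (\<Sum>j=i..<i+l'. b (j mod m)) - (\<Sum>j=i..<i+l'. t (j mod m)) + int l'"
      by (simp add: c_def sum.distrib sum_subtractf)
    ultimately show ?thesis unfolding e by linarith
  qed
  show ?thesis using key i by fastforce
qed

end
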